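(* Let $d\ge2$, $n\ge1$, $F_0(z_1,\ldots,z_n)=(z_1^d,\ldots,z_n^d)$, and let $\mathbf w_0=(w_1,\ldots,w_n)\in\mathbb{C}^n$ be a periodic point of $F_0$ of period $p$ none of whose coordinates is zero. Then for any multi-index $I=(i_1,\ldots,i_n)\in\mathbb{Z}_{\ge0}^n$ and any $k,m\in\{1,\ldots,n\}$, $$\partial_{m,I}\rho_{k,\mathbf w_0}(F_0)=\begin{cases}0&\text{if }m\ne k,\\ (i_kd^{p-1}-d^p)\sum_{i=0}^{p-1}(\mathbf w_0^{I_k})^{d^i}w_k^{d^i(i_k-d)}&\text{if }m=k.\end{cases}$$
   Context: For a polynomial map $G$ near $F_0$, $\mathbf w(G)$ denotes the analytic continuation of $\mathbf w_0$ as a periodic point of period $p$ (given by the implicit function theorem), and $\rho_{k,\mathbf w_0}(G)$ is the $k$-th diagonal entry of the Jacobian matrix $DG^p$ at $\mathbf w(G)$. For $\mathbf z^I=z_1^{i_1}\cdots z_n^{i_n}$ and the $m$-th unit vector $\mathbf e_m$, $P_{m,I}(\mathbf z)=\mathbf z^I\mathbf e_m$ and $\partial_{m,I}\rho_{k,\mathbf w_0}(G)=\frac{d}{dt}\big|_{t=0}\rho_{k,\mathbf w_0}(G+tP_{m,I})$ (well defined for arbitrary $I$, even if $G+tP_{m,I}$ has higher degree). $I_k$ is the multi-index obtained from $I$ by replacing $i_k$ with $0$. *)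

theory Defs
  imports "HOL-Analysis.Analysis"
begin

text \<open>Points of C^n are vectors of type complex^'n, with 'n a finite index type
  (so n = CARD('n) \<ge> 1).  Multi-indices are functions I :: 'n \<Rightarrow> nat.\<close>

definition F0 :: "nat \<Rightarrow> complex^'n \<Rightarrow> complex^'n" where
  "F0 d z = (\<chi> j. (z $ j) ^ d)"

definition monomial :: "('n::finite \<Rightarrow> nat) \<Rightarrow> complex^'n \<Rightarrow> complex" where
  "monomial I z = (\<Prod>l\<in>UNIV. (z $ l) ^ I l)"

definition Pmon :: "'n::finite \<Rightarrow> ('n \<Rightarrow> nat) \<Rightarrow> complex^'n \<Rightarrow> complex^'n" where
  "Pmon m I z = (\<chi> j. if j = m then monomial I z else 0)"

definition Gpert :: "nat \<Rightarrow> 'n::finite \<Rightarrow> ('n \<Rightarrow> nat) \<Rightarrow> complex \<Rightarrow> complex^'n \<Rightarrow> complex^'n" where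
  "Gpert d m I t z = F0 d z + (\<chi> j. t * (Pmon m I z $ j))"

definition drop_index :: "('n \<Rightarrow> nat) \<Rightarrow> 'n \<Rightarrow> ('n \<Rightarrow> nat)" where
  "drop_index I k = I(k := 0)"

definition periodic_point_of_period :: "('a \<Rightarrow> 'a) \<Rightarrow> nat \<Rightarrow> 'a \<Rightarrow> bool" where
  "periodic_point_of_period f p w \<longleftrightarrow>
     p \<ge> 1 \<and> (f ^^ p) w = w \<and> (\<forall>q. 0 < q \<and> q < p \<longrightarrow> (f ^^ q) w \<noteq> w)"

definition jac_diag :: "(complex^'n \<Rightarrow> complex^'n) \<Rightarrow> 'n \<Rightarrow> complex^'n \<Rightarrow> complex" where
  "jac_diag H k z = deriv (\<lambda>s. H (\<chi> j. if j = k then s else z $ j) $ k) (z $ k)"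

text \<open>A continuation of the periodic point w0 along the family t \<mapsto> G t:
  w(0) = w0, w continuous at 0, and w(t) is a fixed point of (G t)^p for t near 0.
  By the implicit function theorem such a branch is unique near 0.\<close>
definition periodic_continuation ::
  "(complex \<Rightarrow> complex^'n \<Rightarrow> complex^'n) \<Rightarrow> nat \<Rightarrow> complex^'n \<Rightarrow> (complex \<Rightarrow> complex^'n) \<Rightarrow> bool" where
  "periodic_continuation G p w0 w \<longleftrightarrow>
     w 0 = w0 \<and> isCont w 0 \<and> (\<forall>\<^sub>F t in nhds 0. (G t ^^ p) (w t) = w t)"

end

theory Submission
  imports Defs
begin

primrec XX :: "nat \<Rightarrow> (nat \<Rightarrow> complex) \<Rightarrow> nat \<Rightarrow> nat \<Rightarrow> complex \<Rightarrow> complex \<Rightarrow> complex" where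
  "XX d c i 0 t y = y"
| "XX d c i (Suc s) t y = (XX d c i s t y)^d + t * c s * (XX d c i s t y)^i"

definition pd :: "complex \<Rightarrow> complex \<Rightarrow> nat \<Rightarrow> complex" where
  "pd u v n = (\<Sum>j<n. v^(n - Suc j) * u^j)"

primrec DD :: "nat \<Rightarrow> (nat \<Rightarrow> complex) \<Rightarrow> nat \<Rightarrow> nat \<Rightarrow> complex \<Rightarrow> complex \<Rightarrow> complex \<Rightarrow> complex" where
  "DD d c i 0 t y z = 1"
| "DD d c i (Suc s) t y z = DD d c i s t y z *
     (pd (XX d c i s t y) (XX d c i s t z) d + t * c s * pd (XX d c i s t y) (XX d c i s t z) i)"

primrec EE :: "nat \<Rightarrow> (nat \<Rightarrow> complex) \<Rightarrow> nat \<Rightarrow> complex \<Rightarrow> nat \<Rightarrow> complex \<Rightarrow> complex" where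
  "EE d c i a 0 t = 0"
| "EE d c i a (Suc s) t = EE d c i a s t * pd (XX d c i s t a) (XX d c i s 0 a) d + c s * (XX d c i s t a)^i"

lemma pd_diff: "u^n - v^n = (u - v) * pd u v n"
  unfolding pd_def by (rule power_diff_sumr2)

lemma pd_same: "pd u u n = of_nat n * u^(n-1)"
proof -
  have "pd u u n = (\<Sum>j<n. u^(n-1))"
    unfolding pd_def by (intro sum.cong refl) (simp flip: power_add)
  then show ?thesis by simp
qed

lemma XX_diff: "XX d c i s t y - XX d c i s t z = (y - z) * DD d c i s t y z"
proof (induction s)
  case 0 then show ?case by simp
next
  case (Suc s)
  let ?A = "XX d c i s t y" and ?B = "XX d c i s t z"
  have "XX d c i (Suc s) t y - XX d c i (Suc s) t z = (?A^d - ?B^d) + t * c s * (?A^i - ?B^i)"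
    by (simp add: algebra_simps)
  also have "\<dots> = (?A - ?B) * (pd ?A ?B d + t * c s * pd ?A ?B i)"
    by (simp add: pd_diff algebra_simps)
  finally show ?case using Suc by (simp add: mult.assoc)
qed

lemma XX_0: "XX d c i s 0 y = y^(d^s)"
  by (induction s) (simp_all flip: power_mult add: mult.commute)

lemma EE_diff: "XX d c i s t a - XX d c i s 0 a = t * EE d c i a s t"
proof (induction s)
  case 0 then show ?case by simp
next
  case (Suc s)
  let ?A = "XX d c i s t a" and ?B = "XX d c i s 0 a"
  have "XX d c i (Suc s) t a - XX d c i (Suc s) 0 a = (?A^d - ?B^d) + t * c s * ?A^i"
    by simp
  also have "\<dots> = (?A - ?B) * pd ?A ?B d + t * c s * ?A^i"
    by (simp add: pd_diff)
  finally show ?case using Suc by (simp add: algebra_simps)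
qed

lemma tendsto_pd [tendsto_intros]:
  "(f \<longlongrightarrow> u) F \<Longrightarrow> (g \<longlongrightarrow> v) F \<Longrightarrow> ((\<lambda>x. pd (f x) (g x) n) \<longlongrightarrow> pd u v n) F"
  unfolding pd_def by (intro tendsto_intros)

lemma tendsto_XX [tendsto_intros]:
  "(T \<longlongrightarrow> t) F \<Longrightarrow> (Y \<longlongrightarrow> y) F \<Longrightarrow> ((\<lambda>x. XX d c i s (T x) (Y x)) \<longlongrightarrow> XX d c i s t y) F"
  by (induction s) (auto intro!: tendsto_intros)

lemma tendsto_DD [tendsto_intros]:
  "(T \<longlongrightarrow> t) F \<Longrightarrow> (Y \<longlongrightarrow> y) F \<Longrightarrow> (Z \<longlongrightarrow> z) F \<Longrightarrow>
   ((\<lambda>x. DD d c i s (T x) (Y x) (Z x)) \<longlongrightarrow> DD d c i s t y z) F"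
  by (induction s) (auto intro!: tendsto_intros)

lemma tendsto_EE [tendsto_intros]:
  "(T \<longlongrightarrow> t) F \<Longrightarrow> ((\<lambda>x. EE d c i a s (T x)) \<longlongrightarrow> EE d c i a s t) F"
  by (induction s) (auto intro!: tendsto_intros)

lemma DD_0: "d \<ge> 1 \<Longrightarrow> DD d c i s 0 y y * y = of_nat d ^ s * y^(d^s)"
proof (induction s)
  case 0 then show ?case by simp
next
  case (Suc s)
  have "DD d c i (Suc s) 0 y y * y = (DD d c i s 0 y y * y) * (of_nat d * (y^(d^s))^(d-1))"
    by (simp add: XX_0 pd_same algebra_simps)
  also have "\<dots> = of_nat d ^ Suc s * ((y^(d^s))^(d-1) * y^(d^s))"
    using Suc by (simp add: algebra_simps)
  also have "(y^(d^s))^(d-1) * y^(d^s) = y^(d^Suc s)"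
  proof (cases d)
    case 0 then show ?thesis using Suc.prems by simp
  next
    case (Suc e) then show ?thesis by (simp flip: power_mult power_add add: algebra_simps)
  qed
  finally show ?case .
qed

lemma TT_alg:
  fixes K X1 X2 y1 y2 D :: complex
  assumes "K \<noteq> 0" "X1 - X2 = (y1 - y2) * D"
  shows "(y1 - (X1 - y1) / K) - (y2 - (X2 - y2) / K) = (y1 - y2) * ((K + 1) - D) / K"
proof -
  have "(y1 - (X1 - y1) / K) - (y2 - (X2 - y2) / K) = (y1 - y2) - ((X1 - X2) - (y1 - y2)) / K"
    by (simp add: diff_divide_distrib add_divide_distrib)
  also have "\<dots> = (y1 - y2) - ((y1 - y2) * D - (y1 - y2)) / K" using assms(2) by simp
  also have "\<dots> = (y1 - y2) * ((K + 1) - D) / K" using assms(1) by (simp add: field_simps)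
  finally show ?thesis .
qed

primrec YD :: "nat \<Rightarrow> (nat \<Rightarrow> complex) \<Rightarrow> nat \<Rightarrow> complex \<Rightarrow> complex \<Rightarrow> nat \<Rightarrow> complex" where
  "YD d c i a x' 0 = x'"
| "YD d c i a x' (Suc q) = of_nat d * (a^(d^q))^(d-1) * YD d c i a x' q + c q * (a^(d^q))^i"

lemma alg1:
  fixes A Y c :: complex
  assumes "A \<noteq> 0" "d \<ge> 2"
  shows "of_nat d * (of_nat (d-1) * A^(d-1-1) * Y) + c * (of_nat i * A^(i-1)) =
    of_nat d * A^(d-1) * (of_nat i / of_nat d * (c * A powi (int i - int d)) + (of_nat d - 1) * (Y / A))"
proof -
  have e1: "A^(d-1) = A^d / A" using assms by (cases d) auto
  have e2: "A^(d-1-1) = A^d / (A*A)" using assms by (cases d; cases "d-1") (auto simp: field_simps)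
  have e3: "of_nat i * A^(i-1) = of_nat i * A^i / A" using assms by (cases i) auto
  have e4: "A powi (int i - int d) = A^i / A^d" using assms by (simp add: power_int_diff)
  have e5: "(of_nat (d-1) :: complex) = of_nat d - 1" using assms by (simp add: of_nat_diff)
  show ?thesis unfolding e1 e2 e4 e5 using e3 assms by (simp add: field_simps)
qed

lemma alg2:
  fixes Lam Se Sy L Q e y ii dd k :: complex
  assumes "Q = L * (ii / dd * e + k * y)"
  shows "Lam * (ii * Se / dd + k * Sy) * L + Q * Lam = Lam * L * (ii * (Se + e) / dd + k * (Sy + y))"
  using assms by (simp add: algebra_simps add_divide_distrib)

lemma alg3:
  fixes A Y c :: complex
  assumes "A \<noteq> 0" "d \<ge> 2"
  shows "(of_nat d * A^(d-1) * Y + c * A^i) / A^d - Y / A = (of_nat d - 1) * (Y / A) + c * A powi (int i - int d)"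
proof -
  have e1: "A^(d-1) = A^d / A" using assms by (cases d) auto
  have e4: "A powi (int i - int d) = A^i / A^d" using assms by (simp add: power_int_diff)
  show ?thesis unfolding e1 e4 using assms by (simp add: field_simps)
qed

lemma powm1: "(y::complex) \<noteq> 0 \<Longrightarrow> y^(n-1) = (if n = 0 then 1 else y^n / y)"
  by (cases n) auto

lemma dist_triple: "dist (t::complex, y::complex, z::complex) (t', y', z') \<le> dist t t' + dist y y' + dist z z'"
proof -
  have "dist (t, y, z) (t', y', z') = norm (t - t', y - y', z - z')" by (simp add: dist_norm)
  also have "\<dots> \<le> norm (t - t') + norm (y - y', z - z')" by (rule norm_Pair_le)
  also have "norm (y - y', z - z') \<le> norm (y - y') + norm (z - z')" by (rule norm_Pair_le)
  finally show ?thesis by (simp add: dist_norm)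
qed

context
  fixes d p i :: nat and c :: "nat \<Rightarrow> complex" and a :: complex
  assumes d2: "d \<ge> 2" and p1: "p \<ge> 1" and a0: "a \<noteq> 0" and aper: "a^(d^p) = a"
begin

lemma M2: "2 \<le> d^p"
proof -
  have "d^1 \<le> d^p" using d2 p1 by (intro power_increasing) auto
  then show ?thesis using d2 by simp
qed

lemma M2r: "2 \<le> real d ^ p"
proof -
  have "real 2 \<le> real (d^p)" using M2 by (simp only: of_nat_le_iff)
  then show ?thesis by simp
qed

lemma normN1: "norm (of_nat d ^ p - 1 :: complex) = real d ^ p - 1"
proof -
  have "of_nat (d^p - 1) = (of_nat (d^p) :: complex) - of_nat 1" using M2 by (intro of_nat_diff) auto
  then have "(of_nat d ^ p - 1 :: complex) = of_nat (d^p - 1)" by simp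
  then have "norm (of_nat d ^ p - 1 :: complex) = real (d^p - 1)" by (simp only: norm_of_nat)
  also have "\<dots> = real (d^p) - real 1" using M2 by (intro of_nat_diff) auto
  finally show ?thesis by simp
qed

lemma N1nz: "(of_nat d ^ p - 1 :: complex) \<noteq> 0"
proof
  assume "(of_nat d ^ p - 1 :: complex) = 0"
  then have "norm (of_nat d ^ p - 1 :: complex) = 0" by simp
  then show False using normN1 M2r by simp
qed

lemma DDa: "DD d c i p 0 a a = of_nat (d^p)"
proof -
  have "DD d c i p 0 a a * a = of_nat (d^p) * a" using DD_0[of d c i p a] d2 aper by simp
  then show ?thesis using a0 by simp
qed

lemma Xa: "XX d c i p 0 a = a" by (simp add: XX_0 aper)

lemma contr_nbhd:
  obtains \<delta> where "\<delta> > 0" "\<And>t y z. norm t < \<delta> \<Longrightarrow> dist y a < \<delta> \<Longrightarrow> dist z a < \<delta> \<Longrightarrow>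
     norm (DD d c i p t y z - of_nat d ^ p) \<le> (real d ^ p - 1) / 2"
proof -
  have "((\<lambda>v. DD d c i p (fst v) (fst (snd v)) (snd (snd v))) \<longlongrightarrow> DD d c i p (fst (0,a,a)) (fst (snd (0,a,a))) (snd (snd (0::complex,a,a)))) (nhds (0,a,a))"
  proof -
    have iv: "((\<lambda>v. v) \<longlongrightarrow> (0::complex,a,a)) (nhds (0,a,a))" by (rule filterlim_ident)
    show ?thesis using tendsto_DD[OF tendsto_fst[OF iv] tendsto_fst[OF tendsto_snd[OF iv]] tendsto_snd[OF tendsto_snd[OF iv]]]
      by simp
  qed
  then have "((\<lambda>v. DD d c i p (fst v) (fst (snd v)) (snd (snd v))) \<longlongrightarrow> of_nat (d^p)) (nhds (0,a,a))"
    by (simp add: DDa)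
  moreover have "(real (d^p) - 1) / 2 > 0" using M2r by simp
  ultimately have "eventually (\<lambda>v. dist (DD d c i p (fst v) (fst (snd v)) (snd (snd v))) (of_nat (d^p))
       < (real (d^p) - 1) / 2) (nhds (0::complex,a,a))"
    by (rule tendstoD)
  then obtain \<delta> where dpos: "\<delta> > 0" and H: "\<And>v. dist v (0,a,a) < \<delta> \<Longrightarrow>
      dist (DD d c i p (fst v) (fst (snd v)) (snd (snd v))) (of_nat (d^p)) < (real (d^p) - 1) / 2"
    unfolding eventually_nhds_metric by blast
  show ?thesis
  proof (rule that[of "\<delta>/3"])
    show "\<delta>/3 > 0" using dpos by simp
    fix t y z :: complex assume "norm t < \<delta>/3" "dist y a < \<delta>/3" "dist z a < \<delta>/3"
    then have "dist (t,y,z) (0,a,a) < \<delta>" using dist_triple[of t y z 0 a a] by (simp add: dist_norm)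
    from H[OF this] show "norm (DD d c i p t y z - of_nat d ^ p) \<le> (real d ^ p - 1) / 2"
      by (simp add: dist_norm)
  qed
qed

definition TT :: "complex \<Rightarrow> complex \<Rightarrow> complex" where
  "TT t y = y - (XX d c i p t y - y) / (of_nat (d^p) - 1)"

lemma TT_fix: "TT t y = y \<longleftrightarrow> XX d c i p t y = y"
  using N1nz unfolding TT_def by auto

lemma TT_diff: "TT t y1 - TT t y2 = (y1 - y2) * (of_nat d ^ p - DD d c i p t y1 y2) / (of_nat d ^ p - 1)"
  unfolding TT_def using TT_alg[OF N1nz XX_diff[of d c i p t y1 y2]] by simp

lemma TT_lip:
  assumes "norm (DD d c i p t y1 y2 - of_nat d ^ p) \<le> (real d ^ p - 1) / 2"
  shows "dist (TT t y1) (TT t y2) \<le> 1/2 * dist y1 y2"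
proof -
  have "dist (TT t y1) (TT t y2) = norm (y1 - y2) * norm (of_nat d ^ p - DD d c i p t y1 y2) / (real d ^ p - 1)"
    by (simp add: dist_norm TT_diff norm_mult norm_divide normN1)
  also have "\<dots> \<le> norm (y1 - y2) * ((real d ^ p - 1) / 2) / (real d ^ p - 1)"
    using assms M2r by (intro divide_right_mono mult_left_mono) (auto simp: norm_minus_commute)
  also have "\<dots> = 1/2 * dist y1 y2" using M2r by (simp add: dist_norm field_simps)
  finally show ?thesis .
qed

lemma exist_cont:
  "\<exists>x. x 0 = a \<and> isCont x 0 \<and> eventually (\<lambda>t. XX d c i p t (x t) = x t) (nhds 0)"
proof -
  obtain \<delta> where dpos: "\<delta> > 0" and H: "\<And>t y z. norm t < \<delta> \<Longrightarrow> dist y a < \<delta> \<Longrightarrow> dist z a < \<delta> \<Longrightarrow>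
     norm (DD d c i p t y z - of_nat d ^ p) \<le> (real d ^ p - 1) / 2"
    using contr_nbhd by blast
  define r0 where "r0 = \<delta> / 2"
  have r0: "r0 > 0" "r0 < \<delta>" using dpos by (auto simp: r0_def)
  have lip: "dist (TT t y1) (TT t y2) \<le> 1/2 * dist y1 y2"
    if "norm t < \<delta>" "dist a y1 \<le> r0" "dist a y2 \<le> r0" for t y1 y2
    using that r0 by (intro TT_lip H) (auto simp: dist_commute)
  have uniq: "y1 = y2" if "norm t < \<delta>" "y1 \<in> cball a r0" "y2 \<in> cball a r0"
     "XX d c i p t y1 = y1" "XX d c i p t y2 = y2" for t y1 y2
  proof -
    have "dist y1 y2 \<le> 1/2 * dist y1 y2"
      using lip[of t y1 y2] that TT_fix[of t y1] TT_fix[of t y2] by simp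
    then show ?thesis by simp
  qed
  have ex: "eventually (\<lambda>t. \<exists>y\<in>cball a r. XX d c i p t y = y) (nhds 0)" if "r > 0" "r \<le> r0" for r
  proof -
    have "((\<lambda>t. XX d c i p t a) \<longlongrightarrow> XX d c i p 0 a) (nhds 0)"
      by (intro tendsto_intros filterlim_ident)
    then have "((\<lambda>t. XX d c i p t a) \<longlongrightarrow> a) (nhds 0)" by (simp add: Xa)
    moreover have "(real d ^ p - 1) * r / 2 > 0" using M2r that by simp
    ultimately have ev1: "eventually (\<lambda>t. dist (XX d c i p t a) a < (real d ^ p - 1) * r / 2) (nhds 0)"
      by (rule tendstoD)
    have ev2: "eventually (\<lambda>t::complex. norm t < \<delta>) (nhds 0)"
      unfolding eventually_nhds_metric using dpos by (auto simp: dist_norm)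
    show ?thesis
    proof (rule eventually_mono[OF eventually_conj[OF ev1 ev2]])
      fix t :: complex assume t: "dist (XX d c i p t a) a < (real d ^ p - 1) * r / 2 \<and> norm t < \<delta>"
      have Ta: "dist (TT t a) a < r / 2"
      proof -
        have "dist (TT t a) a = norm (XX d c i p t a - a) / (real d ^ p - 1)"
          unfolding TT_def by (simp add: dist_norm norm_divide normN1)
        also have "\<dots> < ((real d ^ p - 1) * r / 2) / (real d ^ p - 1)"
          using t M2r by (intro divide_strict_right_mono) (auto simp: dist_norm)
        also have "\<dots> = r / 2" using M2r by (simp add: field_simps)
        finally show ?thesis .
      qed
      have "\<exists>!y\<in>cball a r. TT t y = y"
      proof (rule Banach_fix[of _ "1/2"])
        show "complete (cball a r)" by (simp add: compact_imp_complete)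
        show "cball a r \<noteq> {}" using that by auto
        show "TT t ` cball a r \<subseteq> cball a r"
        proof
          fix z assume "z \<in> TT t ` cball a r"
          then obtain y where y: "y \<in> cball a r" "z = TT t y" by auto
          have "dist (TT t y) (TT t a) \<le> 1/2 * dist y a"
            using lip[of t y a] y that t r0 by (auto simp: dist_commute)
          then have "dist a z \<le> 1/2 * dist y a + dist (TT t a) a"
            using y dist_triangle[of "TT t y" a "TT t a"] by (simp add: dist_commute)
          then show "z \<in> cball a r" using Ta y by (auto simp: dist_commute)
        qed
        show "dist (TT t x) (TT t y) \<le> 1/2 * dist x y" if "x \<in> cball a r" "y \<in> cball a r" for x y
          using lip[of t x y] that t \<open>r \<le> r0\<close> by auto
      qed auto
      then show "\<exists>y\<in>cball a r. XX d c i p t y = y" using TT_fix by blast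
    qed
  qed
  define x where "x t = (SOME y. y \<in> cball a r0 \<and> XX d c i p t y = y)" for t
  have xgood: "x t \<in> cball a r0 \<and> XX d c i p t (x t) = x t" if "\<exists>y\<in>cball a r0. XX d c i p t y = y" for t
    unfolding x_def using that by (metis (mono_tags, lifting) someI_ex)
  have xr: "x t \<in> cball a r" if nt: "norm t < \<delta>" and ey: "\<exists>y\<in>cball a r. XX d c i p t y = y" and rr: "r \<le> r0" for t r
  proof -
    obtain y where y: "y \<in> cball a r" "XX d c i p t y = y" using ey by blast
    then have yr0: "y \<in> cball a r0" using rr by auto
    then have "x t \<in> cball a r0 \<and> XX d c i p t (x t) = x t" using xgood y by blast
    then have "x t = y" using uniq[of t "x t" y] y nt yr0 by blast
    then show ?thesis using y by simp
  qed
  have x0: "x 0 = a"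
    using xr[of 0 0] dpos r0 Xa by auto
  have ev2: "eventually (\<lambda>t::complex. norm t < \<delta>) (nhds 0)"
    unfolding eventually_nhds_metric using dpos by (auto simp: dist_norm)
  have "eventually (\<lambda>t. XX d c i p t (x t) = x t) (nhds 0)"
    using ex[of r0] r0 by (auto elim!: eventually_mono dest!: xgood)
  moreover have "isCont x 0"
    unfolding isCont_def
  proof (rule tendstoI)
    fix e :: real assume e: "e > 0"
    define r where "r = min (e/2) r0"
    have "r > 0" "r \<le> r0" using e r0 by (auto simp: r_def)
    have "eventually (\<lambda>t. dist (x t) (x 0) < e) (nhds 0)"
    proof (rule eventually_mono[OF eventually_conj[OF ex[OF \<open>r > 0\<close> \<open>r \<le> r0\<close>] ev2]])
      fix t assume "(\<exists>y\<in>cball a r. XX d c i p t y = y) \<and> norm t < \<delta>"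
      then have "x t \<in> cball a r" using xr \<open>r \<le> r0\<close> by blast
      then show "dist (x t) (x 0) < e" using x0 e by (auto simp: r_def dist_commute)
    qed
    then show "eventually (\<lambda>t. dist (x t) (x 0) < e) (at 0)"
      unfolding eventually_at_filter by (rule eventually_mono) auto
  qed
  ultimately show ?thesis using x0 by blast
qed

lemma diffable:
  assumes x0: "x 0 = a" and xc: "isCont x 0" and xf: "eventually (\<lambda>t. XX d c i p t (x t) = x t) (nhds 0)"
  shows "\<exists>x'. (x has_field_derivative x') (at 0)"
proof -
  define q where "q t = EE d c i a p t / (1 - DD d c i p t (x t) a)" for t
  have key: "(x t - a) * (1 - DD d c i p t (x t) a) = t * EE d c i a p t" if "XX d c i p t (x t) = x t" for t
  proof -
    have "XX d c i p t (x t) - a = (XX d c i p t (x t) - XX d c i p t a) + (XX d c i p t a - XX d c i p 0 a)"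
      by (simp add: Xa)
    also have "\<dots> = (x t - a) * DD d c i p t (x t) a + t * EE d c i a p t"
      by (simp add: XX_diff EE_diff)
    finally show ?thesis using that by (simp add: algebra_simps)
  qed
  have lim: "((\<lambda>t. 1 - DD d c i p t (x t) a) \<longlongrightarrow> 1 - DD d c i p 0 (x 0) a) (at 0)"
    using xc unfolding isCont_def by (intro tendsto_intros tendsto_ident_at) auto
  have nz: "1 - DD d c i p 0 (x 0) a \<noteq> 0"
    using N1nz by (simp add: x0 DDa)
  have qc: "isCont q 0"
    unfolding isCont_def q_def using nz
    by (intro tendsto_intros lim tendsto_ident_at) auto
  have "eventually (\<lambda>t. 1 - DD d c i p t (x t) a \<noteq> 0) (at 0)"
    using lim nz by (rule tendsto_imp_eventually_ne)
  then have ev: "eventually (\<lambda>t. 1 - DD d c i p t (x t) a \<noteq> 0) (nhds 0)"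
    using nz x0 unfolding eventually_at_filter by (auto elim!: eventually_mono)
  have "eventually (\<lambda>t. x t = a + t * q t) (nhds 0)"
  proof (rule eventually_mono[OF eventually_conj[OF ev xf]])
    fix t assume "1 - DD d c i p t (x t) a \<noteq> 0 \<and> XX d c i p t (x t) = x t"
    then show "x t = a + t * q t" using key[of t] unfolding q_def
      by (simp add: field_simps)
  qed
  moreover have "((\<lambda>t. a + t * q t) has_field_derivative q 0) (at 0)"
    unfolding CARAT_DERIV by (rule exI[of _ q]) (use qc in auto)
  ultimately have "(x has_field_derivative q 0) (at 0)"
    by (subst DERIV_cong_ev[OF refl _ refl]) auto
  then show ?thesis by blast
qed

lemma derivA:
  assumes x0: "x 0 = a" and dx: "(x has_field_derivative x') (at 0)"
  shows "((\<lambda>t. XX d c i s t (x t)) has_field_derivative YD d c i a x' s) (at 0)"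
proof (induction s)
  case 0 then show ?case using dx by simp
next
  case (Suc s)
  show ?case
    apply simp
    apply (rule DERIV_cong)
     apply (rule derivative_intros Suc.IH)+
    apply (simp add: XX_0 x0)
    done
qed

lemma DD_same_Suc: "DD d c i (Suc s) t y y = DD d c i s t y y *
   (of_nat d * (XX d c i s t y)^(d-1) + t * c s * (of_nat i * (XX d c i s t y)^(i-1)))"
  by (simp add: pd_same)

lemma derivB:
  assumes x0: "x 0 = a" and dx: "(x has_field_derivative x') (at 0)"
  shows "((\<lambda>t. DD d c i s t (x t) (x t)) has_field_derivative
     DD d c i s 0 a a * (of_nat i / of_nat d * (\<Sum>q<s. c q * (a^(d^q)) powi (int i - int d))
       + (of_nat d - 1) * (\<Sum>q<s. YD d c i a x' q / a^(d^q)))) (at 0)"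
proof (induction s)
  case 0 then show ?case by simp
next
  case (Suc s)
  show ?case
    apply (simp only: DD_same_Suc)
    apply (rule DERIV_cong)
     apply (rule derivative_intros Suc.IH derivA[OF x0 dx])+
    apply (simp add: XX_0 x0 DD_same_Suc)
    apply (rule alg2)
    using alg1[of "a^(d^s)" d "YD d c i a x' s" "c s" i] a0 d2
    apply (simp add: mult.commute mult.left_commute)
    done
qed

lemma derivF:
  assumes x0: "x 0 = a" and dx: "(x has_field_derivative x') (at 0)"
    and xf: "eventually (\<lambda>t. XX d c i p t (x t) = x t) (nhds 0)"
  shows "((\<lambda>t. DD d c i p t (x t) (x t)) has_field_derivative
     (of_nat i * of_nat d ^ (p - 1) - of_nat d ^ p) * (\<Sum>q<p. c q * (a^(d^q)) powi (int i - int d))) (at 0)"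
proof -
  define u where "u q = YD d c i a x' q / a^(d^q)" for q
  define e where "e q = c q * (a^(d^q)) powi (int i - int d)" for q
  have "(x has_field_derivative YD d c i a x' p) (at 0)"
    using derivA[OF x0 dx, of p] by (subst DERIV_cong_ev[OF refl _ refl]; use xf in \<open>auto elim!: eventually_mono\<close>)
  then have YDp: "YD d c i a x' p = x'" using dx by (rule DERIV_unique)
  have step: "u (Suc q) - u q = (of_nat d - 1) * u q + e q" for q
  proof -
    have "a^(d^Suc q) = (a^(d^q))^d" by (simp add: power_mult mult.commute flip: power_mult)
    then show ?thesis unfolding u_def e_def using alg3[of "a^(d^q)" d "YD d c i a x' q" "c q" i] a0 d2
      by simp
  qed
  have "(\<Sum>q<p. u (Suc q) - u q) = u p - u 0" by (rule sum_lessThan_telescope)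
  also have "\<dots> = 0" unfolding u_def using YDp aper by simp
  finally have "(\<Sum>q<p. (of_nat d - 1) * u q + e q) = 0" using step by simp
  then have S: "(of_nat d - 1) * (\<Sum>q<p. u q) = - (\<Sum>q<p. e q)"
    by (simp add: sum.distrib sum_distrib_left eq_neg_iff_add_eq_0)
  have dp: "(of_nat d :: complex) ^ p / of_nat d = of_nat d ^ (p - 1)"
    using p1 d2 by (cases p) auto
  have "DD d c i p 0 a a * (of_nat i / of_nat d * (\<Sum>q<p. e q) + (of_nat d - 1) * (\<Sum>q<p. u q))
     = (of_nat i * of_nat d ^ (p - 1) - of_nat d ^ p) * (\<Sum>q<p. e q)"
    unfolding S DDa using dp by (simp add: algebra_simps flip: dp) (metis (no_types, lifting) mult.commute times_divide_eq_right)
  then show ?thesis using derivB[OF x0 dx, of p] unfolding u_def e_def by simp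
qed

end

lemma XX_deriv: "(XX d c i s t has_field_derivative DD d c i s t y y) (at y)"
proof -
  have "isCont (\<lambda>z. DD d c i s t z y) y"
    unfolding isCont_def by (intro tendsto_intros tendsto_ident_at)
  then show ?thesis unfolding CARAT_DERIV
    by (intro exI[of _ "\<lambda>z. DD d c i s t z y"]) (auto simp: XX_diff mult.commute)
qed

definition updv :: "complex^'n \<Rightarrow> 'n \<Rightarrow> complex \<Rightarrow> complex^'n" where
  "updv w m x = (\<chi> j. if j = m then x else w $ j)"

definition cc :: "nat \<Rightarrow> complex^'n \<Rightarrow> ('n::finite \<Rightarrow> nat) \<Rightarrow> 'n \<Rightarrow> nat \<Rightarrow> complex" where
  "cc d w0 I m q = (monomial (drop_index I m) w0)^(d^q)"

lemma Gpert_nth: "Gpert d m I t z $ j = (z$j)^d + t * (if j = m then monomial I z else 0)"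
  by (simp add: Gpert_def F0_def Pmon_def)

lemma F0_iter: "((F0 d ^^ s) z) $ j = (z$j)^(d^s)"
  by (induction s) (simp_all add: F0_def flip: power_mult add: mult.commute)

lemma Gpert_iter_other: "j \<noteq> m \<Longrightarrow> ((Gpert d m I t ^^ s) z) $ j = (z$j)^(d^s)"
  by (induction s) (simp_all add: Gpert_nth flip: power_mult add: mult.commute)

lemma monomial_upd:
  "monomial I (\<chi> j. if j = m then Y else (w0$j)^(d^s)) = Y^(I m) * cc d w0 I m s"
proof -
  have "monomial I (\<chi> j. if j = m then Y else (w0$j)^(d^s)) =
      Y^(I m) * (\<Prod>l\<in>UNIV-{m}. ((w0$l)^(d^s))^(I l))"
    unfolding monomial_def by (subst prod.remove[of UNIV m]) (auto intro!: prod.cong)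
  moreover have "cc d w0 I m s = (\<Prod>l\<in>UNIV-{m}. ((w0$l)^(d^s))^(I l))"
    unfolding cc_def monomial_def drop_index_def prod_power_distrib
    by (subst prod.remove[of UNIV m]) (auto intro!: prod.cong simp flip: power_mult simp: mult.commute)
  ultimately show ?thesis by simp
qed

lemma Gpert_iter_upd:
  "(Gpert d m I t ^^ s) (updv w0 m y) = (\<chi> j. if j = m then XX d (cc d w0 I m) (I m) s t y else (w0$j)^(d^s))"
proof (induction s)
  case 0 then show ?case by (simp add: updv_def vec_eq_iff)
next
  case (Suc s)
  show ?case
    by (simp add: Suc vec_eq_iff Gpert_nth monomial_upd flip: power_mult add: mult.commute mult.left_commute)
qed

lemma ev_const:
  fixes f :: "complex \<Rightarrow> complex"
  assumes fc: "isCont f 0" and fe: "eventually (\<lambda>t. f t ^ N = f t) (nhds 0)" and "f 0 \<noteq> 0" and N: "N \<ge> 2"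
  shows "eventually (\<lambda>t. f t = f 0) (nhds 0)"
proof -
  define S where "S = {z::complex. z^(N-1) = 1} \<union> {0}"
  have "finite S" unfolding S_def using N by (auto intro!: finite_roots_unity)
  have inS: "z \<in> S" if "z ^ N = z" for z :: complex
  proof -
    have "z * z^(N-1) = z * 1" using that N by (cases N) auto
    then show ?thesis unfolding S_def by auto
  qed
  have "open (- (S - {f 0}))" using \<open>finite S\<close> by (intro open_Compl finite_imp_closed) auto
  moreover have "f 0 \<in> - (S - {f 0})" by simp
  ultimately have "eventually (\<lambda>t. f t \<in> - (S - {f 0})) (at 0)"
    using fc unfolding isCont_def by (rule topological_tendstoD[rotated])
  then have "eventually (\<lambda>t. t \<noteq> 0 \<longrightarrow> f t \<in> - (S - {f 0})) (nhds 0)"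
    unfolding eventually_at_filter by simp
  then show ?thesis using fe
    by eventually_elim (auto dest: inS)
qed

theorem lemma4p1:
  fixes d p :: nat and w0 :: "complex^'n" and I :: "'n \<Rightarrow> nat" and k m :: 'n
  assumes "d \<ge> 2"
    and "periodic_point_of_period (F0 d) p w0"
    and "\<forall>j. w0 $ j \<noteq> 0"
  shows "(\<exists>w. periodic_continuation (Gpert d m I) p w0 w) \<and>
    (\<forall>w. periodic_continuation (Gpert d m I) p w0 w \<longrightarrow>
      ((\<lambda>t. jac_diag (Gpert d m I t ^^ p) k (w t)) has_field_derivative
        (if m \<noteq> k then 0
         else (of_nat (I k) * of_nat d ^ (p - 1) - of_nat d ^ p) *
           (\<Sum>i<p. (monomial (drop_index I k) w0) ^ (d ^ i) *
              (w0 $ k) powi (int (d ^ i) * (int (I k) - int d))))) (at 0))"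
proof -
  note d2 = assms(1)
  have p1: "p \<ge> 1" and perw: "(F0 d ^^ p) w0 = w0"
    using assms(2) unfolding periodic_point_of_period_def by auto
  have per: "(w0$j)^(d^p) = w0$j" for j
    using F0_iter[where d=d and s=p and z=w0 and j=j] perw by simp
  define a where "a = w0 $ m"
  define c where "c = cc d w0 I m"
  have a0: "a \<noteq> 0" using assms(3) by (simp add: a_def)
  have aper: "a^(d^p) = a" using per by (simp add: a_def)
  have N2: "d^p \<ge> 2" using M2[OF d2 p1 a0 aper] .
  have iterm: "((Gpert d m I t ^^ p) (updv w0 m y)) $ m = XX d c (I m) p t y" for t y
    by (simp add: Gpert_iter_upd c_def)
  have updw0: "updv w0 m a = w0" by (simp add: updv_def a_def vec_eq_iff)
  have part1: "\<exists>w. periodic_continuation (Gpert d m I) p w0 w"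
  proof -
    obtain x where x0: "x 0 = a" and xc: "isCont x 0"
        and xf: "eventually (\<lambda>t. XX d c (I m) p t (x t) = x t) (nhds 0)"
      using exist_cont[OF d2 p1 a0 aper, of c "I m"] by blast
    define w where "w t = updv w0 m (x t)" for t
    have "w 0 = w0" using x0 updw0 by (simp add: w_def)
    moreover have "isCont w 0"
      unfolding isCont_def w_def updv_def
    proof (rule vec_tendstoI)
      fix j show "((\<lambda>t. (\<chi> j. if j = m then x t else w0 $ j) $ j) \<longlongrightarrow> (\<chi> j. if j = m then x 0 else w0 $ j) $ j) (at 0)"
        using xc unfolding isCont_def by auto
    qed
    moreover have "eventually (\<lambda>t. (Gpert d m I t ^^ p) (w t) = w t) (nhds 0)"
      using xf unfolding w_def Gpert_iter_upd by eventually_elim (simp add: c_def per vec_eq_iff updv_def)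
    ultimately show ?thesis unfolding periodic_continuation_def by blast
  qed
  have part2: "((\<lambda>t. jac_diag (Gpert d m I t ^^ p) k (w t)) has_field_derivative
        (if m \<noteq> k then 0
         else (of_nat (I k) * of_nat d ^ (p - 1) - of_nat d ^ p) *
           (\<Sum>i<p. (monomial (drop_index I k) w0) ^ (d ^ i) *
              (w0 $ k) powi (int (d ^ i) * (int (I k) - int d))))) (at 0)"
    if pc: "periodic_continuation (Gpert d m I) p w0 w" for w
  proof -
    have w0': "w 0 = w0" and wc: "isCont w 0" and wf: "eventually (\<lambda>t. (Gpert d m I t ^^ p) (w t) = w t) (nhds 0)"
      using pc unfolding periodic_continuation_def by auto
    have compc: "isCont (\<lambda>t. w t $ j) 0" for j
      using wc unfolding isCont_def by (rule tendsto_vec_nth)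
    have other: "eventually (\<lambda>t. w t $ j = w0 $ j) (nhds 0)" if "j \<noteq> m" for j
    proof -
      have "eventually (\<lambda>t. (w t $ j) ^ (d^p) = w t $ j) (nhds 0)"
        using wf by eventually_elim (metis Gpert_iter_other[OF that])
      from ev_const[OF compc this _ N2] show ?thesis using w0' assms(3) by simp
    qed
    have "eventually (\<lambda>t. \<forall>j. j \<noteq> m \<longrightarrow> w t $ j = w0 $ j) (nhds 0)"
      by (rule eventually_all_finite) (use other in \<open>auto intro: eventually_mono\<close>)
    then have evw: "eventually (\<lambda>t. w t = updv w0 m (w t $ m)) (nhds 0)"
      by eventually_elim (auto simp: updv_def vec_eq_iff)
    define x where "x t = w t $ m" for t
    have x0: "x 0 = a" using w0' by (simp add: x_def a_def)
    have xc: "isCont x 0" using compc[of m] unfolding x_def[abs_def] .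
    have xf: "eventually (\<lambda>t. XX d c (I m) p t (x t) = x t) (nhds 0)"
      using evw wf
    proof eventually_elim
      case (elim t)
      then have "((Gpert d m I t ^^ p) (updv w0 m (x t))) $ m = x t"
        by (metis x_def)
      then show ?case by (simp add: iterm)
    qed
    show ?thesis
    proof (cases "m = k")
      case False
      have ev: "eventually (\<lambda>t. jac_diag (Gpert d m I t ^^ p) k (w t) = deriv (\<lambda>s. s^(d^p)) (w0 $ k)) (nhds 0)"
        using other[of k] False
      proof (auto elim!: eventually_mono)
        fix t assume "w t $ k = w0 $ k"
        then show "jac_diag (Gpert d m I t ^^ p) k (w t) = deriv (\<lambda>s. s^(d^p)) (w0 $ k)"
          unfolding jac_diag_def using False by (simp add: Gpert_iter_other)
      qed
      have "((\<lambda>t. deriv (\<lambda>s. s^(d^p)) (w0 $ k)) has_field_derivative 0) (at 0)"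
        by (rule DERIV_const)
      then show ?thesis using False by (subst DERIV_cong_ev[OF refl ev refl]) simp
    next
      case True
      obtain x' where dx: "(x has_field_derivative x') (at 0)"
        using diffable[OF d2 p1 a0 aper x0 xc xf] by blast
      have ev: "eventually (\<lambda>t. jac_diag (Gpert d m I t ^^ p) k (w t) = DD d c (I m) p t (x t) (x t)) (nhds 0)"
        using evw
      proof (elim eventually_mono)
        fix t assume wt: "w t = updv w0 m (w t $ m)"
        have "(\<chi> j. if j = m then s else w t $ j) = updv w0 m s" for s
          using True wt by (simp add: vec_eq_iff updv_def)
        then have "jac_diag (Gpert d m I t ^^ p) k (w t) = deriv (XX d c (I m) p t) (x t)"
          unfolding jac_diag_def True[symmetric] by (simp add: iterm x_def)
        also have "\<dots> = DD d c (I m) p t (x t) (x t)" by (rule DERIV_imp_deriv[OF XX_deriv])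
        finally show "jac_diag (Gpert d m I t ^^ p) k (w t) = DD d c (I m) p t (x t) (x t)" .
      qed
      have pw: "(z::complex) powi (int d ^ q) = z ^ (d^q)" for z q
        by (metis of_nat_power power_int_of_nat)
      have sumeq: "(\<Sum>q<p. c q * (a^(d^q)) powi (int (I m) - int d)) =
          (\<Sum>i<p. (monomial (drop_index I k) w0) ^ (d ^ i) * (w0 $ k) powi (int (d ^ i) * (int (I k) - int d)))"
        using True by (simp add: c_def cc_def a_def power_int_mult pw)
      show ?thesis
        using derivF[OF d2 p1 a0 aper x0 dx xf] True sumeq
        by (subst DERIV_cong_ev[OF refl ev refl]) simp
    qed
  qed
  show ?thesis using part1 part2 by blast
qed

end
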